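(* Let $\Lambda$ be a rank-2 Bratteli diagram and let $x$ be an infinite path in $\Lambda$ such that $o(x(0,ne_1))\to\infty$ as $n\to\infty$. Then $x$ is aperiodic: whenever $p,q\in\mathbb N^2$ satisfy $\sigma^p(x)=\sigma^q(x)$, we have $p=q$.
   Context: A $2$-graph is a countable category $\Lambda$ with a functor $d:\Lambda\to\mathbb N^2$ satisfying unique factorisation (if $d(\lambda)=m+n$ there are unique $\mu,\nu$ with $d(\mu)=m,d(\nu)=n,\lambda=\mu\nu$). Vertices = degree-$0$ paths; $r,s$ range/source; $\Lambda^n=d^{-1}(n)$; $e_1=(1,0),e_2=(0,1)$; $vE=E\cap r^{-1}(v)$, $Ev=E\cap s^{-1}(v)$. Row-finite: each $v\Lambda^n$ finite. Blue paths: degree in $\mathbb Ne_1$; red paths: degree in $\mathbb Ne_2$. $\lambda(m,n)$ is the unique path with $\lambda=\lambda'\lambda(m,n)\lambda''$, $d(\lambda')=m$, $d(\lambda(m,n))=n-m$; $\lambda(n)=\lambda(n,n)$. A cycle: $d(\lambda)\ne0$, $r(\lambda)=s(\lambda)$, $\lambda(n)\ne s(\lambda)$ for $0<n<d(\lambda)$; isolated: no $n\le d(\lambda)$ with $r(\lambda)\Lambda^n\setminus\{\lambda(0,n)\}\ne\emptyset$ and no $n\le d(\lambda)$ with $\Lambda^ns(\lambda)\setminus\{\lambda(d(\lambda)-n,d(\lambda))\}\ne\emptyset$. A rank-2 Bratteli diagram of depth $N\in\mathbb N\cup\{\infty\}$ is a row-finite 2-graph with $\Lambda^0=\bigsqcup_{0\le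 n\le N}V_n$ (all $n\in\mathbb N$ if $N=\infty$), each $V_n$ nonempty finite, such that: every blue edge $e$ has $r(e)\in V_n,s(e)\in V_{n+1}$ for some $n$; every vertex $v$ with $\Lambda^{e_1}v=\emptyset$ lies in $V_0$ and every $v$ with $v\Lambda^{e_1}=\emptyset$ lies in $V_N$ (none if $N=\infty$); every vertex lies on an isolated cycle of red edges and every red edge has range and source in the same $V_n$. For a blue path $\alpha$, let $f$ be the unique red edge with $s(f)=r(\alpha)$ and $\mathcal F(\alpha)$ the unique blue path with $f\alpha=\mathcal F(\alpha)f'$ for a red edge $f'$; $o(\alpha)=\min\{k>0:\mathcal F^k(\alpha)=\alpha\}$. $\Omega_2$ is the 2-graph with objects $\mathbb N^2$, morphisms $(m,n)$ for $m\le n$, $r(m,n)=m,s(m,n)=n,d(m,n)=n-m$. An infinite path is a degree-preserving functor $x:\Omega_2\to\Lambda$; write $x(m,n)$ for the image of $(m,n)$; for $p\in\mathbb N^2$, $\sigma^p(x)$ is the infinite path $(m,n)\mapsto x(m+p,n+p)$. *)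

theory Defs
  imports Main "HOL-Library.Product_Plus" "HOL-Library.Product_Order"
    "HOL-Library.Countable_Set" "HOL-Library.Extended_Nat"
begin

text \<open>A 2-graph: morphisms form the set Mor of type 'a; objects are identified with
  the identity morphisms (degree-0 paths). cmp mu nu is the composite mu nu (first nu
  then mu, i.e. r (mu nu) = r mu, s (mu nu) = s nu), defined when s mu = r nu.\<close>

definition is_vertex :: "'a set \<Rightarrow> ('a \<Rightarrow> nat \<times> nat) \<Rightarrow> 'a \<Rightarrow> bool" where
  "is_vertex Mor d v \<longleftrightarrow> v \<in> Mor \<and> d v = 0"

definition two_graph ::
  "'a set \<Rightarrow> ('a \<Rightarrow> 'a) \<Rightarrow> ('a \<Rightarrow> 'a) \<Rightarrow> ('a \<Rightarrow> 'a \<Rightarrow> 'a) \<Rightarrow> ('a \<Rightarrow> nat \<times> nat) \<Rightarrow> bool" where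
  "two_graph Mor r s cmp d \<longleftrightarrow>
     countable Mor
   \<and> (\<forall>l\<in>Mor. r l \<in> Mor \<and> s l \<in> Mor \<and> d (r l) = 0 \<and> d (s l) = 0
        \<and> r (r l) = r l \<and> s (r l) = r l \<and> r (s l) = s l \<and> s (s l) = s l
        \<and> cmp (r l) l = l \<and> cmp l (s l) = l)
   \<and> (\<forall>mu\<in>Mor. \<forall>nu\<in>Mor. s mu = r nu \<longrightarrow>
        cmp mu nu \<in> Mor \<and> r (cmp mu nu) = r mu \<and> s (cmp mu nu) = s nu
        \<and> d (cmp mu nu) = d mu + d nu)
   \<and> (\<forall>a\<in>Mor. \<forall>b\<in>Mor. \<forall>c\<in>Mor. s a = r b \<and> s b = r c \<longrightarrow>
        cmp (cmp a b) c = cmp a (cmp b c))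
   \<and> (\<forall>l\<in>Mor. \<forall>m n. d l = m + n \<longrightarrow>
        (\<exists>!(mu, nu). mu \<in> Mor \<and> nu \<in> Mor \<and> s mu = r nu \<and> d mu = m \<and> d nu = n
                     \<and> l = cmp mu nu))"

definition row_finite :: "'a set \<Rightarrow> ('a \<Rightarrow> 'a) \<Rightarrow> ('a \<Rightarrow> nat \<times> nat) \<Rightarrow> bool" where
  "row_finite Mor r d \<longleftrightarrow>
     (\<forall>v n. is_vertex Mor d v \<longrightarrow> finite {l \<in> Mor. r l = v \<and> d l = n})"

text \<open>lambda(m,n): the unique path with lambda = lambda' lambda(m,n) lambda'',
  d lambda' = m, d lambda(m,n) = n - m (for m \<le> n \<le> d lambda).\<close>
definition seg :: "'a set \<Rightarrow> ('a \<Rightarrow> 'a) \<Rightarrow> ('a \<Rightarrow> 'a) \<Rightarrow> ('a \<Rightarrow> 'a \<Rightarrow> 'a) \<Rightarrow> ('a \<Rightarrow> nat \<times> nat)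
     \<Rightarrow> 'a \<Rightarrow> nat \<times> nat \<Rightarrow> nat \<times> nat \<Rightarrow> 'a" where
  "seg Mor r s cmp d l m n = (THE mu. \<exists>a b. a \<in> Mor \<and> mu \<in> Mor \<and> b \<in> Mor
      \<and> s a = r mu \<and> s mu = r b \<and> d a = m \<and> d mu = n - m
      \<and> l = cmp (cmp a mu) b)"

definition is_cycle :: "'a set \<Rightarrow> ('a \<Rightarrow> 'a) \<Rightarrow> ('a \<Rightarrow> 'a) \<Rightarrow> ('a \<Rightarrow> 'a \<Rightarrow> 'a) \<Rightarrow> ('a \<Rightarrow> nat \<times> nat)
     \<Rightarrow> 'a \<Rightarrow> bool" where
  "is_cycle Mor r s cmp d l \<longleftrightarrow> l \<in> Mor \<and> d l \<noteq> 0 \<and> r l = s l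
     \<and> (\<forall>n. 0 < n \<and> n < d l \<longrightarrow> seg Mor r s cmp d l n n \<noteq> s l)"

definition is_isolated_cycle :: "'a set \<Rightarrow> ('a \<Rightarrow> 'a) \<Rightarrow> ('a \<Rightarrow> 'a) \<Rightarrow> ('a \<Rightarrow> 'a \<Rightarrow> 'a)
     \<Rightarrow> ('a \<Rightarrow> nat \<times> nat) \<Rightarrow> 'a \<Rightarrow> bool" where
  "is_isolated_cycle Mor r s cmp d l \<longleftrightarrow> is_cycle Mor r s cmp d l
     \<and> \<not> (\<exists>n \<le> d l. {mu \<in> Mor. r mu = r l \<and> d mu = n} - {seg Mor r s cmp d l 0 n} \<noteq> {})
     \<and> \<not> (\<exists>n \<le> d l. {mu \<in> Mor. s mu = s l \<and> d mu = n}
                        - {seg Mor r s cmp d l (d l - n) (d l)} \<noteq> {})"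

abbreviation e1 :: "nat \<times> nat" where "e1 \<equiv> (1, 0)"
abbreviation e2 :: "nat \<times> nat" where "e2 \<equiv> (0, 1)"

text \<open>Rank-2 Bratteli diagram of depth N, with the vertex partition given by a level
  function: V_n = {v. level v = n}.\<close>
definition rank2_bratteli ::
  "'a set \<Rightarrow> ('a \<Rightarrow> 'a) \<Rightarrow> ('a \<Rightarrow> 'a) \<Rightarrow> ('a \<Rightarrow> 'a \<Rightarrow> 'a) \<Rightarrow> ('a \<Rightarrow> nat \<times> nat)
     \<Rightarrow> enat \<Rightarrow> ('a \<Rightarrow> nat) \<Rightarrow> bool" where
  "rank2_bratteli Mor r s cmp d N level \<longleftrightarrow>
     two_graph Mor r s cmp d \<and> row_finite Mor r d
   \<and> (\<forall>v. is_vertex Mor d v \<longrightarrow> enat (level v) \<le> N)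
   \<and> (\<forall>n. enat n \<le> N \<longrightarrow> finite {v. is_vertex Mor d v \<and> level v = n}
                          \<and> {v. is_vertex Mor d v \<and> level v = n} \<noteq> {})
   \<and> (\<forall>e\<in>Mor. d e = e1 \<longrightarrow> level (s e) = Suc (level (r e)))
   \<and> (\<forall>v. is_vertex Mor d v \<and> \<not> (\<exists>e\<in>Mor. d e = e1 \<and> s e = v) \<longrightarrow> level v = 0)
   \<and> (\<forall>v. is_vertex Mor d v \<and> \<not> (\<exists>e\<in>Mor. d e = e1 \<and> r e = v) \<longrightarrow> N = enat (level v))
   \<and> (\<forall>v. is_vertex Mor d v \<longrightarrow> (\<exists>l k. is_isolated_cycle Mor r s cmp d l
          \<and> d l = (0, k) \<and> (\<exists>n \<le> d l. v = seg Mor r s cmp d l n n)))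
   \<and> (\<forall>f\<in>Mor. d f = e2 \<longrightarrow> level (r f) = level (s f))"

text \<open>For a blue path alpha: f = the unique red edge with s f = r alpha, and
  F alpha = the unique blue path with f alpha = F(alpha) f' for a red edge f'.\<close>
definition red_into :: "'a set \<Rightarrow> ('a \<Rightarrow> 'a) \<Rightarrow> ('a \<Rightarrow> nat \<times> nat) \<Rightarrow> 'a \<Rightarrow> 'a" where
  "red_into Mor s d v = (THE f. f \<in> Mor \<and> d f = e2 \<and> s f = v)"

definition Fmap :: "'a set \<Rightarrow> ('a \<Rightarrow> 'a) \<Rightarrow> ('a \<Rightarrow> 'a) \<Rightarrow> ('a \<Rightarrow> 'a \<Rightarrow> 'a) \<Rightarrow> ('a \<Rightarrow> nat \<times> nat)
     \<Rightarrow> 'a \<Rightarrow> 'a" where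
  "Fmap Mor r s cmp d a = (THE b. b \<in> Mor \<and> (\<exists>k. d b = (k, 0)) \<and>
      (\<exists>f'. f' \<in> Mor \<and> d f' = e2 \<and> s b = r f'
            \<and> cmp (red_into Mor s d (r a)) a = cmp b f'))"

definition orb :: "'a set \<Rightarrow> ('a \<Rightarrow> 'a) \<Rightarrow> ('a \<Rightarrow> 'a) \<Rightarrow> ('a \<Rightarrow> 'a \<Rightarrow> 'a) \<Rightarrow> ('a \<Rightarrow> nat \<times> nat)
     \<Rightarrow> 'a \<Rightarrow> nat" where
  "orb Mor r s cmp d a = (LEAST k. 0 < k \<and> (Fmap Mor r s cmp d ^^ k) a = a)"

text \<open>Infinite path: degree-preserving functor Omega_2 \<rightarrow> Lambda, given by its values
  x m n on morphisms (m,n), m \<le> n (values for m \<not>\<le> n are irrelevant).\<close>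
definition infinite_path :: "'a set \<Rightarrow> ('a \<Rightarrow> 'a) \<Rightarrow> ('a \<Rightarrow> 'a) \<Rightarrow> ('a \<Rightarrow> 'a \<Rightarrow> 'a)
     \<Rightarrow> ('a \<Rightarrow> nat \<times> nat) \<Rightarrow> (nat \<times> nat \<Rightarrow> nat \<times> nat \<Rightarrow> 'a) \<Rightarrow> bool" where
  "infinite_path Mor r s cmp d x \<longleftrightarrow>
     (\<forall>m n. m \<le> n \<longrightarrow> x m n \<in> Mor \<and> d (x m n) = n - m
                       \<and> r (x m n) = x m m \<and> s (x m n) = x n n)
   \<and> (\<forall>m n p. m \<le> n \<and> n \<le> p \<longrightarrow> cmp (x m n) (x n p) = x m p)"

definition shift :: "nat \<times> nat \<Rightarrow> (nat \<times> nat \<Rightarrow> nat \<times> nat \<Rightarrow> 'a) \<Rightarrow> nat \<times> nat \<Rightarrow> nat \<times> nat \<Rightarrow> 'a" where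
  "shift p x = (\<lambda>m n. x (m + p) (n + p))"

definition path_eq :: "(nat \<times> nat \<Rightarrow> nat \<times> nat \<Rightarrow> 'a) \<Rightarrow> (nat \<times> nat \<Rightarrow> nat \<times> nat \<Rightarrow> 'a) \<Rightarrow> bool" where
  "path_eq x y \<longleftrightarrow> (\<forall>m n. m \<le> n \<longrightarrow> x m n = y m n)"

end

theory Submission imports Defs begin

lemma tg_fact:
  assumes tg: "two_graph Mor r s cmp d"
  shows "\<forall>l\<in>Mor. \<forall>m n. d l = m + n \<longrightarrow>
        (\<exists>!(mu, nu). mu \<in> Mor \<and> nu \<in> Mor \<and> s mu = r nu \<and> d mu = m \<and> d nu = n
                     \<and> l = cmp mu nu)"
  using tg unfolding two_graph_def by (elim conjE) assumption

lemma tg_cmp: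
  assumes tg: "two_graph Mor r s cmp d" and "mu \<in> Mor" "nu \<in> Mor" "s mu = r nu"
  shows "cmp mu nu \<in> Mor" "r (cmp mu nu) = r mu" "s (cmp mu nu) = s nu" "d (cmp mu nu) = d mu + d nu"
  using tg assms unfolding two_graph_def by auto

lemma tg_obj:
  assumes tg: "two_graph Mor r s cmp d" and "l \<in> Mor"
  shows "r l \<in> Mor" "s l \<in> Mor" "d (r l) = 0" "d (s l) = 0"
        "r (r l) = r l" "s (r l) = r l" "r (s l) = s l" "s (s l) = s l"
        "cmp (r l) l = l" "cmp l (s l) = l"
  using tg assms unfolding two_graph_def by auto

lemma fact_unique:
  assumes tg: "two_graph Mor r s cmp d"
    and "mu \<in> Mor" "nu \<in> Mor" "mu' \<in> Mor" "nu' \<in> Mor"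
    and "s mu = r nu" "s mu' = r nu'" "d mu = d mu'" "d nu = d nu'"
    and "cmp mu nu = cmp mu' nu'"
  shows "mu = mu' \<and> nu = nu'"
proof -
  let ?l = "cmp mu nu"
  have l: "?l \<in> Mor" "d ?l = d mu + d nu" using tg_cmp[OF tg assms(2,3,6)] by auto
  have E: "\<exists>!(a, b). a \<in> Mor \<and> b \<in> Mor \<and> s a = r b \<and> d a = d mu \<and> d b = d nu \<and> ?l = cmp a b"
    using tg_fact[OF tg] l by blast
  have P1: "(\<lambda>(a, b). a \<in> Mor \<and> b \<in> Mor \<and> s a = r b \<and> d a = d mu \<and> d b = d nu \<and> ?l = cmp a b) (mu, nu)"
    using assms by simp
  have P2: "(\<lambda>(a, b). a \<in> Mor \<and> b \<in> Mor \<and> s a = r b \<and> d a = d mu \<and> d b = d nu \<and> ?l = cmp a b) (mu', nu')"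
    using assms by simp
  have "(mu, nu) = (mu', nu')" using E P1 P2 by (metis (no_types, lifting) ex1E)
  then show ?thesis by simp
qed

lemma deg0:
  assumes tg: "two_graph Mor r s cmp d" and "mu \<in> Mor" "d mu = 0"
  shows "r mu = mu" "s mu = mu"
proof -
  note A = tg_obj[OF tg assms(2)]
  have "r mu = mu \<and> mu = s mu"
    by (rule fact_unique[OF tg]) (use A assms in auto)
  then show "r mu = mu" "s mu = mu" by auto
qed


lemma fact_exists:
  assumes tg: "two_graph Mor r s cmp d" and l: "l \<in> Mor" and eq: "d l = m + n"
  shows "\<exists>mu nu. mu \<in> Mor \<and> nu \<in> Mor \<and> s mu = r nu \<and> d mu = m \<and> d nu = n \<and> l = cmp mu nu"
proof -
  have "\<exists>!(mu, nu). mu \<in> Mor \<and> nu \<in> Mor \<and> s mu = r nu \<and> d mu = m \<and> d nu = n \<and> l = cmp mu nu"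
    by (rule bspec[OF tg_fact[OF tg] l, rule_format, OF eq])
  then have "\<exists>p. case p of (mu, nu) \<Rightarrow> mu \<in> Mor \<and> nu \<in> Mor \<and> s mu = r nu \<and> d mu = m \<and> d nu = n \<and> l = cmp mu nu"
    by (rule ex1_implies_ex)
  then show ?thesis by auto
qed

lemma prod_le_diff: "(n::nat\<times>nat) \<le> m \<Longrightarrow> m = n + (m - n)"
  by (cases n, cases m) auto

lemma seg_vertex:
  assumes tg: "two_graph Mor r s cmp d" and l: "l \<in> Mor" and nl: "n \<le> d l"
  shows "\<exists>a b. a \<in> Mor \<and> b \<in> Mor \<and> s a = r b \<and> d a = n \<and> d b = d l - n \<and> l = cmp a b
          \<and> seg Mor r s cmp d l n n = s a"
proof -
  have "d l = n + (d l - n)" using nl by (rule prod_le_diff)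
  then obtain a b where ab: "a \<in> Mor" "b \<in> Mor" "s a = r b" "d a = n" "d b = d l - n" "l = cmp a b"
    using fact_exists[OF tg l] by blast
  note Oa = tg_obj[OF tg ab(1)]
  have "seg Mor r s cmp d l n n = s a"
    unfolding seg_def
  proof (rule the_equality)
    show "\<exists>a' b'. a' \<in> Mor \<and> s a \<in> Mor \<and> b' \<in> Mor \<and> s a' = r (s a) \<and> s (s a) = r b' \<and> d a' = n \<and>
          d (s a) = n - n \<and> l = cmp (cmp a' (s a)) b'"
      apply (rule exI[of _ a], rule exI[of _ b])
      apply (intro conjI)
      using ab(1,2,4) Oa(2,4,7,8,10) ab(3) ab(6) by simp_all
  next
    fix mu assume "\<exists>a' b'. a' \<in> Mor \<and> mu \<in> Mor \<and> b' \<in> Mor \<and> s a' = r mu \<and> s mu = r b' \<and> d a' = n \<and>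
          d mu = n - n \<and> l = cmp (cmp a' mu) b'"
    then obtain a' b' where H: "a' \<in> Mor" "mu \<in> Mor" "b' \<in> Mor" "s a' = r mu" "s mu = r b'" "d a' = n"
        "d mu = 0" "l = cmp (cmp a' mu) b'" by auto
    have mu: "r mu = mu" "s mu = mu" using deg0[OF tg H(2,7)] by auto
    have "cmp a' mu = a'" using tg_obj[OF tg H(1)] H(4) mu by simp
    with H have l': "l = cmp a' b'" by simp
    have dl1: "d l = d a' + d b'" using tg_cmp(4)[OF tg H(1,3)] H(4,5) mu l' by simp
    have dl2: "d l = d a + d b" using tg_cmp(4)[OF tg ab(1,2,3)] ab(6) by simp
    have "d b' = d b" using dl1 dl2 ab(4) H(6) by simp
    moreover have "s a' = r b'" using H(4,5) mu by simp
    ultimately have "a' = a" using fact_unique[OF tg H(1,3) ab(1,2)] H(6) ab(3,4,6) l' by simp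
    then show "mu = s a" using H mu by simp
  qed
  with ab show ?thesis by blast
qed

lemma rb_tg: "rank2_bratteli Mor r s cmp d N level \<Longrightarrow> two_graph Mor r s cmp d"
  unfolding rank2_bratteli_def by (elim conjE)

lemma rb_rf: "rank2_bratteli Mor r s cmp d N level \<Longrightarrow> row_finite Mor r d"
  unfolding rank2_bratteli_def by (elim conjE)

lemma rb_lvN0: "rank2_bratteli Mor r s cmp d N level \<Longrightarrow> (\<forall>v. is_vertex Mor d v \<longrightarrow> enat (level v) \<le> N)"
  unfolding rank2_bratteli_def by (elim conjE)

lemma rb_fin0: "rank2_bratteli Mor r s cmp d N level \<Longrightarrow> (\<forall>n. enat n \<le> N \<longrightarrow> finite {v. is_vertex Mor d v \<and> level v = n}
                          \<and> {v. is_vertex Mor d v \<and> level v = n} \<noteq> {})"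
  unfolding rank2_bratteli_def by (elim conjE)

lemma rb_blue0: "rank2_bratteli Mor r s cmp d N level \<Longrightarrow> (\<forall>e\<in>Mor. d e = e1 \<longrightarrow> level (s e) = Suc (level (r e)))"
  unfolding rank2_bratteli_def by (elim conjE)

lemma rb_red0: "rank2_bratteli Mor r s cmp d N level \<Longrightarrow> (\<forall>f\<in>Mor. d f = e2 \<longrightarrow> level (r f) = level (s f))"
  unfolding rank2_bratteli_def by (elim conjE)

lemma rb_cyc0: "rank2_bratteli Mor r s cmp d N level \<Longrightarrow> (\<forall>v. is_vertex Mor d v \<longrightarrow> (\<exists>l k. is_isolated_cycle Mor r s cmp d l
          \<and> d l = (0, k) \<and> (\<exists>n \<le> d l. v = seg Mor r s cmp d l n n)))"
  unfolding rank2_bratteli_def by (elim conjE)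

lemma rb_lvN: "rank2_bratteli Mor r s cmp d N level \<Longrightarrow> is_vertex Mor d v \<Longrightarrow> enat (level v) \<le> N"
  using rb_lvN0 by blast
lemma rb_fin: "rank2_bratteli Mor r s cmp d N level \<Longrightarrow> enat n \<le> N \<Longrightarrow> finite {v. is_vertex Mor d v \<and> level v = n}"
  using rb_fin0 by blast
lemma rb_blue: "rank2_bratteli Mor r s cmp d N level \<Longrightarrow> e \<in> Mor \<Longrightarrow> d e = e1 \<Longrightarrow> level (s e) = Suc (level (r e))"
  using rb_blue0 by blast
lemma rb_red: "rank2_bratteli Mor r s cmp d N level \<Longrightarrow> f \<in> Mor \<Longrightarrow> d f = e2 \<Longrightarrow> level (r f) = level (s f)"
  using rb_red0 by blast
lemma rb_cyc: "rank2_bratteli Mor r s cmp d N level \<Longrightarrow> is_vertex Mor d v \<Longrightarrow>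
   (\<exists>l k. is_isolated_cycle Mor r s cmp d l \<and> d l = (0, k) \<and> (\<exists>n \<le> d l. v = seg Mor r s cmp d l n n))"
  using rb_cyc0 by blast

lemma red_src_unique:
  assumes rb: "rank2_bratteli Mor r s cmp d N level"
    and v: "v \<in> Mor" "d v = 0"
    and e: "e \<in> Mor" "d e = e2" "s e = v" and e': "e' \<in> Mor" "d e' = e2" "s e' = v"
  shows "e = e'"
proof -
  have tg: "two_graph Mor r s cmp d" using rb by (rule rb_tg)
  obtain l K n where iso: "is_isolated_cycle Mor r s cmp d l" and dl: "d l = (0, K)"
    and nl: "n \<le> d l" and vs: "v = seg Mor r s cmp d l n n"
    using rb_cyc[OF rb, of v] v unfolding is_vertex_def by blast
  have lM: "l \<in> Mor" and dl0: "d l \<noteq> 0" and rsl: "r l = s l"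
    using iso unfolding is_isolated_cycle_def is_cycle_def by auto
  have src: "\<And>n' mu. n' \<le> d l \<Longrightarrow> mu \<in> Mor \<Longrightarrow> s mu = s l \<Longrightarrow> d mu = n' \<Longrightarrow>
      mu = seg Mor r s cmp d l (d l - n') (d l)"
  proof -
    fix n' mu assume "n' \<le> d l" "mu \<in> Mor" "s mu = s l" "d mu = n'"
    then show "mu = seg Mor r s cmp d l (d l - n') (d l)"
      using iso unfolding is_isolated_cycle_def by blast
  qed
  have K: "K \<ge> 1" using dl0 dl by (cases K) (auto simp: zero_prod_def)
  obtain a b where ab: "a \<in> Mor" "b \<in> Mor" "s a = r b" "d a = n" "d b = d l - n" "l = cmp a b"
      "seg Mor r s cmp d l n n = s a"
    using seg_vertex[OF tg lM nl] by blast
  have va: "v = s a" using vs ab by simp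
  obtain i where ni: "n = (0, i)" "i \<le> K" using nl dl by (cases n) auto
  show ?thesis
  proof (cases "i = 0")
    case True
    then have "d a = 0" using ab ni by (simp add: zero_prod_def)
    then have "r a = a" "s a = a" using deg0[OF tg ab(1)] by auto
    then have "s l = v" using rsl ab tg_cmp[OF tg ab(1,2,3)] va by simp
    then show ?thesis using src[of e2 e] src[of e2 e'] e e' dl K by simp
  next
    case False
    have sb: "s b = s l" using ab tg_cmp[OF tg ab(1,2,3)] by simp
    have C: "cmp e b \<in> Mor" "s (cmp e b) = s l" "d (cmp e b) = (0, 1 + (K - i))"
      using tg_cmp[OF tg e(1) ab(2)] e va ab sb dl ni by auto
    have C': "cmp e' b \<in> Mor" "s (cmp e' b) = s l" "d (cmp e' b) = (0, 1 + (K - i))"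
      using tg_cmp[OF tg e'(1) ab(2)] e' va ab sb dl ni by auto
    have le: "(0, 1 + (K - i)) \<le> d l" using dl False ni by simp
    have "cmp e b = cmp e' b" using src[OF le C(1) C(2,3)] src[OF le C'(1) C'(2,3)] by simp
    then show ?thesis using fact_unique[OF tg e(1) ab(2) e'(1) ab(2)] e e' va ab by simp
  qed
qed


lemma ip_mor:
  assumes "infinite_path Mor r s cmp d x" "m \<le> n"
  shows "x m n \<in> Mor" "d (x m n) = n - m" "r (x m n) = x m m" "s (x m n) = x n n"
  using assms unfolding infinite_path_def by blast+

lemma ip_cmp:
  assumes "infinite_path Mor r s cmp d x" "m \<le> n" "n \<le> p"
  shows "cmp (x m n) (x n p) = x m p"
  using assms unfolding infinite_path_def by blast

lemma Fmap_step:
  assumes rb: "rank2_bratteli Mor r s cmp d N level"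
    and ip: "infinite_path Mor r s cmp d x" and cn: "c \<le> n"
  shows "Fmap Mor r s cmp d (x (c, Suc j) (n, Suc j)) = x (c, j) (n, j)"
proof -
  have tg: "two_graph Mor r s cmp d" using rb by (rule rb_tg)
  define al where "al = x (c, Suc j) (n, Suc j)"
  define f0 where "f0 = x (c, j) (c, Suc j)"
  define b0 where "b0 = x (c, j) (n, j)"
  define g0 where "g0 = x (n, j) (n, Suc j)"
  define v where "v = x (c, Suc j) (c, Suc j)"
  have al: "al \<in> Mor" "r al = v" "d al = (n - c, 0)"
    using ip_mor[OF ip, of "(c, Suc j)" "(n, Suc j)"] cn unfolding al_def v_def by auto
  have f0: "f0 \<in> Mor" "d f0 = e2" "s f0 = v" "r f0 = x (c, j) (c, j)"
    using ip_mor[OF ip, of "(c, j)" "(c, Suc j)"] unfolding f0_def v_def by auto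
  have b0: "b0 \<in> Mor" "d b0 = (n - c, 0)" "s b0 = x (n, j) (n, j)"
    using ip_mor[OF ip, of "(c, j)" "(n, j)"] cn unfolding b0_def by auto
  have g0: "g0 \<in> Mor" "d g0 = e2" "r g0 = x (n, j) (n, j)"
    using ip_mor[OF ip, of "(n, j)" "(n, Suc j)"] unfolding g0_def by auto
  have v: "v \<in> Mor" "d v = 0"
    using ip_mor[OF ip, of "(c, Suc j)" "(c, Suc j)"] unfolding v_def by (auto simp: zero_prod_def)
  have sq: "cmp f0 al = cmp b0 g0"
  proof -
    have "cmp f0 al = x (c, j) (n, Suc j)"
      unfolding f0_def al_def by (rule ip_cmp[OF ip]) (use cn in auto)
    moreover have "cmp b0 g0 = x (c, j) (n, Suc j)"
      unfolding b0_def g0_def by (rule ip_cmp[OF ip]) (use cn in auto)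
    ultimately show ?thesis by simp
  qed
  have red: "red_into Mor s d (r al) = f0"
    unfolding red_into_def al(2)
  proof (rule the_equality)
    show "f0 \<in> Mor \<and> d f0 = e2 \<and> s f0 = v" using f0 by simp
  next
    fix f assume "f \<in> Mor \<and> d f = e2 \<and> s f = v"
    then show "f = f0" using red_src_unique[OF rb v] f0 by blast
  qed
  have "Fmap Mor r s cmp d al = b0"
    unfolding Fmap_def red
  proof (rule the_equality)
    show "b0 \<in> Mor \<and> (\<exists>k. d b0 = (k, 0)) \<and>
      (\<exists>f'. f' \<in> Mor \<and> d f' = e2 \<and> s b0 = r f' \<and> cmp f0 al = cmp b0 f')"
      using b0 g0 sq by auto
  next
    fix b assume "b \<in> Mor \<and> (\<exists>k. d b = (k, 0)) \<and>
      (\<exists>f'. f' \<in> Mor \<and> d f' = e2 \<and> s b = r f' \<and> cmp f0 al = cmp b f')"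
    then obtain k f' where H: "b \<in> Mor" "d b = (k, 0)" "f' \<in> Mor" "d f' = e2" "s b = r f'"
      "cmp f0 al = cmp b f'" by blast
    have e: "cmp b f' = cmp b0 g0" using H(6) sq by simp
    have "d (cmp b f') = (k, 1)" using tg_cmp(4)[OF tg H(1,3,5)] H by simp
    moreover have "d (cmp b0 g0) = (n - c, 1)" using tg_cmp(4)[OF tg b0(1) g0(1)] b0 g0 by simp
    ultimately have "k = n - c" using e by simp
    then show "b = b0" using fact_unique[OF tg H(1,3) b0(1) g0(1)] H b0 g0 e by simp
  qed
  then show ?thesis unfolding al_def b0_def .
qed

lemma Fmap_iter:
  assumes rb: "rank2_bratteli Mor r s cmp d N level"
    and ip: "infinite_path Mor r s cmp d x" and cn: "c \<le> n"
  shows "(Fmap Mor r s cmp d ^^ i) (x (c, j + i) (n, j + i)) = x (c, j) (n, j)"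
proof (induction i)
  case 0 then show ?case by simp
next
  case (Suc i)
  have "(Fmap Mor r s cmp d ^^ Suc i) (x (c, j + Suc i) (n, j + Suc i))
      = (Fmap Mor r s cmp d ^^ i) (Fmap Mor r s cmp d (x (c, Suc (j + i)) (n, Suc (j + i))))"
    by (simp only: add_Suc_right funpow_Suc_right o_apply)
  also have "\<dots> = (Fmap Mor r s cmp d ^^ i) (x (c, j + i) (n, j + i))"
    using Fmap_step[OF rb ip cn] by simp
  finally show ?case using Suc by simp
qed


lemma lev_formula:
  assumes rb: "rank2_bratteli Mor r s cmp d N level"
    and ip: "infinite_path Mor r s cmp d x"
  shows "level (x (a, b) (a, b)) = level (x (0, 0) (0, 0)) + a"
proof -
  have red: "level (x (a, b) (a, b)) = level (x (a, 0) (a, 0))" for a b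
  proof (induction b)
    case 0 then show ?case by simp
  next
    case (Suc b)
    have "level (r (x (a, b) (a, Suc b))) = level (s (x (a, b) (a, Suc b)))"
      by (rule rb_red[OF rb]) (use ip_mor[OF ip, of "(a, b)" "(a, Suc b)"] in auto)
    then show ?case using Suc ip_mor[OF ip, of "(a, b)" "(a, Suc b)"] by simp
  qed
  have blue: "level (x (a, 0) (a, 0)) = level (x (0, 0) (0, 0)) + a" for a
  proof (induction a)
    case 0 then show ?case by simp
  next
    case (Suc a)
    have "level (s (x (a, 0) (Suc a, 0))) = Suc (level (r (x (a, 0) (Suc a, 0))))"
      by (rule rb_blue[OF rb]) (use ip_mor[OF ip, of "(a, 0)" "(Suc a, 0)"] in auto)
    then show ?case using Suc ip_mor[OF ip, of "(a, 0)" "(Suc a, 0)"] by simp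
  qed
  show ?thesis using red[of a b] blue[of a] by simp
qed

lemma core:
  assumes rb: "rank2_bratteli Mor r s cmp d N level"
    and ip: "infinite_path Mor r s cmp d x"
    and lim: "filterlim (\<lambda>n. orb Mor r s cmp d (x (0, 0) (n, 0))) at_top sequentially"
    and eq: "path_eq (shift (a, b) x) (shift (a, b + k) x)"
    and k: "0 < k"
  shows False
proof -
  have tg: "two_graph Mor r s cmp d" using rb by (rule rb_tg)
  define F where "F = Fmap Mor r s cmp d"
  have per: "x (a, j + k) (n, j + k) = x (a, j) (n, j)" if "b \<le> j" "a \<le> n" for j n
  proof -
    have "shift (a, b) x (0, j - b) (n - a, j - b) = shift (a, b + k) x (0, j - b) (n - a, j - b)"
      using eq unfolding path_eq_def by simp
    then show ?thesis using that unfolding shift_def by (simp add: algebra_simps)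
  qed
  have perall: "\<forall>j. b \<le> j + t \<longrightarrow> x (a, j + k) (n, j + k) = x (a, j) (n, j)" if an: "a \<le> n" for t n
  proof (induction t)
    case 0 then show ?case using per an by simp
  next
    case (Suc t)
    show ?case
    proof (intro allI impI)
      fix j assume "b \<le> j + Suc t"
      then have "b \<le> Suc j + t" by simp
      then have "x (a, Suc j + k) (n, Suc j + k) = x (a, Suc j) (n, Suc j)" using Suc.IH by blast
      then have "F (x (a, Suc (j + k)) (n, Suc (j + k))) = F (x (a, Suc j) (n, Suc j))" by simp
      then show "x (a, j + k) (n, j + k) = x (a, j) (n, j)"
        using Fmap_step[OF rb ip an] unfolding F_def by simp
    qed
  qed
  have wmul: "x (a, t * k) (n, t * k) = x (a, 0) (n, 0)" if an: "a \<le> n" for t n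
  proof (induction t)
    case 0 then show ?case by simp
  next
    case (Suc t)
    have "x (a, t * k + k) (n, t * k + k) = x (a, t * k) (n, t * k)"
      using perall[OF an, of b] by simp
    then show ?case using Suc by (simp add: add.commute)
  qed
  define L where "L = level (x (0, 0) (0, 0))"
  define V where "V = {v. is_vertex Mor d v \<and> level v = L}"
  define S where "S = (\<Union>v\<in>V. {l \<in> Mor. r l = v \<and> d l = (a, 0)})"
  have vx: "is_vertex Mor d (x m m)" for m
    using ip_mor[OF ip, of m m] unfolding is_vertex_def by (simp add: zero_prod_def)
  have "enat L \<le> N" unfolding L_def by (rule rb_lvN[OF rb vx])
  then have finV: "finite V" unfolding V_def by (rule rb_fin[OF rb])
  have "finite {l \<in> Mor. r l = v \<and> d l = (a, 0)}" if "v \<in> V" for v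
    using rb_rf[OF rb] that unfolding row_finite_def V_def by blast
  then have finS: "finite S" unfolding S_def by (intro finite_UN_I[OF finV])
  define z where "z = (\<lambda>t. x (0, t * k) (a, t * k))"
  have zS: "z t \<in> S" for t
  proof -
    have m: "z t \<in> Mor" "r (z t) = x (0, t * k) (0, t * k)" "d (z t) = (a, 0)"
      using ip_mor[OF ip, of "(0, t * k)" "(a, t * k)"] unfolding z_def by auto
    have "x (0, t * k) (0, t * k) \<in> V"
      using vx[of "(0, t * k)"] lev_formula[OF rb ip, of 0 "t * k"] unfolding V_def L_def by simp
    then show ?thesis using m unfolding S_def by blast
  qed
  have "\<not> inj z"
  proof
    assume "inj z"
    moreover have "finite (range z)" using zS finS by (meson finite_subset image_subsetI)
    ultimately have "finite (UNIV :: nat set)" using finite_imageD by blast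
    then show False by simp
  qed
  then obtain i i' where ii: "z i = z i'" "i \<noteq> i'" unfolding inj_def by blast
  obtain i0 i1 where i01: "z i0 = z i1" "i0 < i1"
  proof (cases "i < i'")
    case True then show ?thesis using that ii by blast
  next
    case False then show ?thesis using that[of i' i] ii by simp
  qed
  define P where "P = (i1 - i0) * k"
  have P0: "0 < P" unfolding P_def using i01 k by simp
  have i1P: "P + i0 * k = i1 * k" unfolding P_def using i01
    by (simp add: algebra_simps diff_mult_distrib)
  have zP: "x (0, P) (a, P) = x (0, 0) (a, 0)"
  proof -
    have A: "(F ^^ (i0 * k)) (x (0, 0 + i0 * k) (a, 0 + i0 * k)) = x (0, 0) (a, 0)"
      unfolding F_def by (rule Fmap_iter[OF rb ip]) simp
    have B: "(F ^^ (i0 * k)) (x (0, P + i0 * k) (a, P + i0 * k)) = x (0, P) (a, P)"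
      unfolding F_def by (rule Fmap_iter[OF rb ip]) simp
    show ?thesis using A B i01(1) i1P unfolding z_def by simp
  qed
  have bound: "orb Mor r s cmp d (x (0, 0) (n, 0)) \<le> P" if an: "a \<le> n" for n
  proof -
    have y0: "x (0, 0) (n, 0) = cmp (x (0, 0) (a, 0)) (x (a, 0) (n, 0))"
      by (rule ip_cmp[OF ip, symmetric]) (use an in auto)
    have yP: "x (0, P) (n, P) = cmp (x (0, P) (a, P)) (x (a, P) (n, P))"
      by (rule ip_cmp[OF ip, symmetric]) (use an in auto)
    have wP: "x (a, P) (n, P) = x (a, 0) (n, 0)" unfolding P_def by (rule wmul[OF an])
    have yy: "x (0, P) (n, P) = x (0, 0) (n, 0)" using y0 yP wP zP by simp
    have "(F ^^ P) (x (0, 0 + P) (n, 0 + P)) = x (0, 0) (n, 0)"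
      unfolding F_def by (rule Fmap_iter[OF rb ip]) simp
    then have "(F ^^ P) (x (0, 0) (n, 0)) = x (0, 0) (n, 0)" using yy by simp
    then show ?thesis unfolding orb_def F_def using P0 by (intro Least_le) simp
  qed
  have "\<forall>\<^sub>F n in sequentially. Suc P \<le> orb Mor r s cmp d (x (0, 0) (n, 0))"
    using lim unfolding filterlim_at_top by blast
  then obtain M where M: "\<And>n. n \<ge> M \<Longrightarrow> Suc P \<le> orb Mor r s cmp d (x (0, 0) (n, 0))"
    unfolding eventually_sequentially by blast
  have "Suc P \<le> orb Mor r s cmp d (x (0, 0) (max M a, 0))" using M by simp
  moreover have "orb Mor r s cmp d (x (0, 0) (max M a, 0)) \<le> P" by (rule bound) simp
  ultimately show False by simp
qed

lemma path_eq_sym: "path_eq y z \<Longrightarrow> path_eq z y"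
  unfolding path_eq_def by auto

theorem lemma5p4:
  fixes Mor :: "'a set" and r s :: "'a \<Rightarrow> 'a" and cmp :: "'a \<Rightarrow> 'a \<Rightarrow> 'a"
    and d :: "'a \<Rightarrow> nat \<times> nat" and N :: enat and level :: "'a \<Rightarrow> nat"
    and x :: "nat \<times> nat \<Rightarrow> nat \<times> nat \<Rightarrow> 'a"
  assumes "rank2_bratteli Mor r s cmp d N level"
    and "infinite_path Mor r s cmp d x"
    and "filterlim (\<lambda>n. orb Mor r s cmp d (x (0, 0) (n, 0))) at_top sequentially"
  shows "\<forall>p q. path_eq (shift p x) (shift q x) \<longrightarrow> p = q"
proof (intro allI impI)
  fix p q assume eq: "path_eq (shift p x) (shift q x)"
  obtain a b where p: "p = (a, b)" by (cases p)
  obtain a' b' where q: "q = (a', b')" by (cases q)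
  have "shift p x 0 0 = shift q x 0 0" using eq unfolding path_eq_def by blast
  then have "x p p = x q q" unfolding shift_def by simp
  then have "x (a, b) (a, b) = x (a', b') (a', b')" by (simp only: p q)
  then have "level (x (a, b) (a, b)) = level (x (a', b') (a', b'))" by (rule arg_cong)
  then have aa: "a' = a" using lev_formula[OF assms(1,2), of a b] lev_formula[OF assms(1,2), of a' b'] by simp
  have eq': "path_eq (shift (a, b) x) (shift (a, b') x)" using eq unfolding p q aa .
  show "p = q"
  proof (rule ccontr)
    assume "p \<noteq> q"
    then have "b \<noteq> b'" using p q aa by simp
    then show False
    proof (cases "b < b'")
      case True
      have "b' = b + (b' - b)" using True by simp
      then have "path_eq (shift (a, b) x) (shift (a, b + (b' - b)) x)" using eq' by metis
      moreover have "0 < b' - b" using True by simp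
      ultimately show False by (rule core[OF assms])
    next
      case False
      with \<open>b \<noteq> b'\<close> have "b' < b" by simp
      have "b = b' + (b - b')" using \<open>b' < b\<close> by simp
      then have "path_eq (shift (a, b') x) (shift (a, b' + (b - b')) x)" using path_eq_sym[OF eq'] by metis
      moreover have "0 < b - b'" using \<open>b' < b\<close> by simp
      ultimately show False by (rule core[OF assms])
    qed
  qed
qed

end
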